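(* Let $\mathfrak A$ be an abelian (possibly non-unital) $C^*$-algebra with Gel'fand spectrum $X=\sigma(\mathfrak A)$, let $\Phi$ be a unital $*$-endomorphism of $\mathfrak A\cong C_0(X)$, and let $\tau:X\to X$ be the continuous proper map with $\Phi(f)=f\circ\tau$ for all $f\in C_0(X)$. Then either $\sigma(\Phi)=\mathbb D$, or $\{\lambda\in\mathbb C:0<|\lambda|<1\}\subset\mathbb C\setminus\sigma(\Phi)$. Moreover: (i) if $\tau(X)\neq X$, then $0\in\sigma(\Phi)$; (ii) if $\tau^{n+1}(X)\neq\tau^n(X)$ for every $n\in\mathbb N$, then $\sigma(\Phi)=\mathbb D$; (iii) if there exists $n_0\in\mathbb N$ with $\tau^{n_0+1}(X)=\tau^{n_0}(X)$, then either $\sigma(\Phi)=\mathbb D$ or $\sigma(\Phi)\subset\mathbb T\cup\{0\}$.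
   Context: $\mathbb D$ is the closed unit disk and $\mathbb T$ the unit circle in $\mathbb C$; $\tau^0$ is the identity. A $*$-endomorphism $\Phi$ of a (possibly non-unital) $C^*$-algebra $\mathfrak A$ is called unital if $\big(\Phi(u_\iota)\big)_{\iota\in I}$ is an approximate unity for $\mathfrak A$ for some (equivalently, every) approximate unity $(u_\iota)_{\iota\in I}$ of $\mathfrak A$; an approximate unity is a net with $u_\iota a\to a$ and $au_\iota\to a$ in norm for all $a$. For such $\Phi$ on $C_0(X)$ there is a unique continuous proper $\tau$ with $\Phi(f)=f\circ\tau$. $\sigma(\Phi)$ is the spectrum of $\Phi$ as a bounded operator on $\mathfrak A$. *)

theory Defs
  imports "HOL-Analysis.Analysis"
begin

text \<open>Functions are normalised to be 0 outside the topspace,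
  so that elements are determined by their values on X.\<close>
definition C0 :: "'a topology \<Rightarrow> ('a \<Rightarrow> complex) set" where
  "C0 X = {f. continuous_map X euclidean f
              \<and> (\<forall>e>0. compactin X {x \<in> topspace X. e \<le> cmod (f x)})
              \<and> (\<forall>x. x \<notin> topspace X \<longrightarrow> f x = 0)}"

definition sup_norm :: "'a topology \<Rightarrow> ('a \<Rightarrow> complex) \<Rightarrow> real" where
  "sup_norm X f = Sup (insert 0 ((\<lambda>x. cmod (f x)) ` topspace X))"

definition bounded_op :: "'a topology \<Rightarrow> (('a \<Rightarrow> complex) \<Rightarrow> ('a \<Rightarrow> complex)) \<Rightarrow> bool" where
  "bounded_op X T \<longleftrightarrow>
     (\<forall>f\<in>C0 X. T f \<in> C0 X)
   \<and> (\<forall>f\<in>C0 X. \<forall>g\<in>C0 X. T (\<lambda>x. f x + g x) = (\<lambda>x. T f x + T g x))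
   \<and> (\<forall>f\<in>C0 X. \<forall>c::complex. T (\<lambda>x. c * f x) = (\<lambda>x. c * T f x))
   \<and> (\<exists>K. \<forall>f\<in>C0 X. sup_norm X (T f) \<le> K * sup_norm X f)"

definition op_spectrum :: "'a topology \<Rightarrow> (('a \<Rightarrow> complex) \<Rightarrow> ('a \<Rightarrow> complex)) \<Rightarrow> complex set" where
  "op_spectrum X T = {z. \<not> (\<exists>S. bounded_op X S
        \<and> (\<forall>f\<in>C0 X. S (\<lambda>x. T f x - z * f x) = f)
        \<and> (\<forall>f\<in>C0 X. (\<lambda>x. T (S f) x - z * S f x) = f))}"

definition comp_op :: "'a topology \<Rightarrow> ('a \<Rightarrow> 'a) \<Rightarrow> ('a \<Rightarrow> complex) \<Rightarrow> ('a \<Rightarrow> complex)" where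
  "comp_op X \<tau> f = (\<lambda>x. if x \<in> topspace X then f (\<tau> x) else 0)"

end

theory Submission imports Defs begin

lemma C0_D:
  assumes "f \<in> C0 X"
  shows "continuous_map X euclidean f" "\<And>e. e > 0 \<Longrightarrow> compactin X {x \<in> topspace X. e \<le> cmod (f x)}"
    "\<And>x. x \<notin> topspace X \<Longrightarrow> f x = 0"
  using assms by (auto simp: C0_def)

lemma C0_I:
  assumes "continuous_map X euclidean f" "\<And>e. e > 0 \<Longrightarrow> compactin X {x \<in> topspace X. e \<le> cmod (f x)}"
    "\<And>x. x \<notin> topspace X \<Longrightarrow> f x = 0"
  shows "f \<in> C0 X"
  using assms by (auto simp: C0_def)

lemma closedin_ge_norm:
  assumes "continuous_map X euclidean f"
  shows "closedin X {x \<in> topspace X. e \<le> cmod (f x)}"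
proof -
  have "continuous_map X euclideanreal (\<lambda>x. cmod (f x))"
    using assms continuous_map_norm by blast
  then show ?thesis
    using closedin_continuous_map_preimage[of X euclideanreal "\<lambda>x. cmod (f x)" "{e..}"]
    by auto
qed

lemma C0_bounded:
  assumes "f \<in> C0 X"
  shows "\<exists>B\<ge>0. \<forall>x. cmod (f x) \<le> B"
proof -
  let ?K = "{x \<in> topspace X. 1 \<le> cmod (f x)}"
  have K: "compactin X ?K" using C0_D(2)[OF assms, of 1] by simp
  have c: "continuous_map X euclideanreal (\<lambda>x. cmod (f x))"
    using C0_D(1)[OF assms] continuous_map_norm by blast
  have "compactin euclideanreal ((\<lambda>x. cmod (f x)) ` ?K)"
    using image_compactin[OF K c] .
  then have "compact ((\<lambda>x. cmod (f x)) ` ?K)" by (simp add: compactin_euclidean_iff)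
  then have "bounded ((\<lambda>x. cmod (f x)) ` ?K)" by (rule compact_imp_bounded)
  then obtain B where B: "\<And>x. x \<in> ?K \<Longrightarrow> cmod (f x) \<le> B"
    by (auto simp: bounded_iff)
  show ?thesis
  proof (intro exI[of _ "max 1 B"] conjI allI)
    fix x
    show "cmod (f x) \<le> max 1 B"
    proof (cases "x \<in> topspace X")
      case True then show ?thesis using B[of x] by (cases "1 \<le> cmod (f x)") auto
    next
      case False then show ?thesis using C0_D(3)[OF assms] by simp
    qed
  qed simp
qed

lemma sup_norm_ge:
  assumes "f \<in> C0 X"
  shows "cmod (f x) \<le> sup_norm X f"
proof -
  obtain B where B: "\<And>x. cmod (f x) \<le> B" "B \<ge> 0" using C0_bounded[OF assms] by blast
  have bdd: "bdd_above (insert 0 ((\<lambda>x. cmod (f x)) ` topspace X))"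
    using B by (auto intro!: bdd_aboveI[of _ B])
  show ?thesis
  proof (cases "x \<in> topspace X")
    case True then show ?thesis unfolding sup_norm_def by (intro cSup_upper[OF _ bdd]) auto
  next
    case False
    then have "f x = 0" using C0_D(3)[OF assms] by simp
    then show ?thesis unfolding sup_norm_def by (simp add: cSup_upper[OF _ bdd])
  qed
qed

lemma sup_norm_nonneg:
  assumes "f \<in> C0 X"
  shows "0 \<le> sup_norm X f"
  using sup_norm_ge[OF assms, of undefined] by (meson norm_ge_zero order_trans)

lemma sup_norm_le:
  assumes "\<And>x. x \<in> topspace X \<Longrightarrow> cmod (f x) \<le> M" "0 \<le> M"
  shows "sup_norm X f \<le> M"
  unfolding sup_norm_def using assms by (intro cSup_least) auto

lemma C0_zero: "(\<lambda>x. 0) \<in> C0 X"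
  by (intro C0_I) auto

lemma C0_add:
  assumes "f \<in> C0 X" "g \<in> C0 X"
  shows "(\<lambda>x. f x + g x) \<in> C0 X"
proof (intro C0_I)
  show c: "continuous_map X euclidean (\<lambda>x. f x + g x)"
    by (rule continuous_map_add[OF C0_D(1)[OF assms(1)] C0_D(1)[OF assms(2)]])
  fix e :: real assume e: "e > 0"
  have "{x \<in> topspace X. e \<le> cmod (f x + g x)} \<subseteq>
        {x \<in> topspace X. e/2 \<le> cmod (f x)} \<union> {x \<in> topspace X. e/2 \<le> cmod (g x)}"
  proof (rule subsetI)
    fix x assume "x \<in> {x \<in> topspace X. e \<le> cmod (f x + g x)}"
    then have x: "x \<in> topspace X" "e \<le> cmod (f x + g x)" by auto
    then have "e/2 \<le> cmod (f x) \<or> e/2 \<le> cmod (g x)" using norm_triangle_ineq[of "f x" "g x"] by linarith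
    then show "x \<in> {x \<in> topspace X. e/2 \<le> cmod (f x)} \<union> {x \<in> topspace X. e/2 \<le> cmod (g x)}" using x by auto
  qed
  moreover have "compactin X ({x \<in> topspace X. e/2 \<le> cmod (f x)} \<union> {x \<in> topspace X. e/2 \<le> cmod (g x)})"
    using C0_D(2)[OF assms(1), of "e/2"] C0_D(2)[OF assms(2), of "e/2"] e by (intro compactin_Un) auto
  ultimately show "compactin X {x \<in> topspace X. e \<le> cmod (f x + g x)}"
    using closedin_ge_norm[OF c] closed_compactin by blast
next
  fix x assume "x \<notin> topspace X" then show "f x + g x = 0" using C0_D(3)[OF assms(1)] C0_D(3)[OF assms(2)] by simp
qed

lemma C0_scale:
  assumes "f \<in> C0 X"
  shows "(\<lambda>x. c * f x) \<in> C0 X"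
proof (cases "c = 0")
  case True then show ?thesis using C0_zero by simp
next
  case False
  show ?thesis
  proof (intro C0_I)
    show "continuous_map X euclidean (\<lambda>x. c * f x)"
      using C0_D(1)[OF assms] by (simp add: continuous_map_atin tendsto_mult_left)
    fix e :: real assume e: "e > 0"
    have "{x \<in> topspace X. e \<le> cmod (c * f x)} = {x \<in> topspace X. e / cmod c \<le> cmod (f x)}"
      using False by (auto simp: norm_mult field_simps)
    then show "compactin X {x \<in> topspace X. e \<le> cmod (c * f x)}"
      using C0_D(2)[OF assms, of "e / cmod c"] e False by simp
  next
    fix x assume "x \<notin> topspace X" then show "c * f x = 0" using C0_D(3)[OF assms] by simp
  qed
qed

lemma C0_sum:
  assumes "finite I" "\<And>i. i \<in> I \<Longrightarrow> F i \<in> C0 X"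
  shows "(\<lambda>x. \<Sum>i\<in>I. F i x) \<in> C0 X"
  using assms
proof (induction I rule: finite_induct)
  case empty then show ?case using C0_zero by simp
next
  case (insert a I)
  then show ?case using C0_add[of "F a" X "\<lambda>x. \<Sum>i\<in>I. F i x"] by simp
qed

definition compf :: "'a topology \<Rightarrow> ('a \<Rightarrow> 'a) \<Rightarrow> ('a \<Rightarrow> complex) \<Rightarrow> ('a \<Rightarrow> complex)" where
  "compf X \<phi> g = (\<lambda>x. if x \<in> topspace X then g (\<phi> x) else 0)"

lemma C0_comp:
  assumes "continuous_map X X \<phi>" "proper_map X X \<phi>" "g \<in> C0 X"
  shows "compf X \<phi> g \<in> C0 X"
proof (intro C0_I)
  have "continuous_map X euclidean (g \<circ> \<phi>)"
    using assms C0_D(1) continuous_map_compose by blast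
  then show "continuous_map X euclidean (compf X \<phi> g)"
    by (rule continuous_map_eq) (simp add: compf_def)
  fix e :: real assume e: "e > 0"
  have "{x \<in> topspace X. e \<le> cmod (compf X \<phi> g x)} = {x \<in> topspace X. \<phi> x \<in> {y \<in> topspace X. e \<le> cmod (g y)}}"
    using assms(1) by (auto simp: compf_def continuous_map_def)
  moreover have "compactin X {x \<in> topspace X. \<phi> x \<in> {y \<in> topspace X. e \<le> cmod (g y)}}"
    using assms(2) C0_D(2)[OF assms(3) e] unfolding proper_map_alt by blast
  ultimately show "compactin X {x \<in> topspace X. e \<le> cmod (compf X \<phi> g x)}"
    by simp
qed (simp add: compf_def)

lemma C0_unif:
  fixes F :: "nat \<Rightarrow> 'a \<Rightarrow> complex"
  assumes F: "\<And>n. F n \<in> C0 X" and out: "\<And>x. x \<notin> topspace X \<Longrightarrow> f x = 0"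
    and conv: "\<And>e. e > 0 \<Longrightarrow> \<forall>\<^sub>F n in sequentially. \<forall>x \<in> topspace X. cmod (F n x - f x) < e"
  shows "f \<in> C0 X"
proof (intro C0_I)
  show c: "continuous_map X euclidean f"
    unfolding mtopology_is_euclidean[symmetric]
  proof (rule Met_TC.continuous_map_uniform_limit[where F=sequentially and f=F])
    show "\<forall>\<^sub>F n in sequentially. continuous_map X Met_TC.mtopology (F n)"
      using C0_D(1)[OF F] by simp
    fix e :: real assume "0 < e"
    then show "\<forall>\<^sub>F n in sequentially. \<forall>x\<in>topspace X. f x \<in> UNIV \<and> dist (F n x) (f x) < e"
      using conv[of e] by (simp add: dist_norm)
  qed simp
  fix e :: real assume e: "e > 0"
  obtain n where hn: "\<forall>x \<in> topspace X. cmod (F n x - f x) < e/2" using eventually_happens'[OF _ conv[of "e/2"]] e by auto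
  have "{x \<in> topspace X. e \<le> cmod (f x)} \<subseteq> {x \<in> topspace X. e/2 \<le> cmod (F n x)}"
  proof clarify
    fix x assume "x \<in> topspace X" "e \<le> cmod (f x)"
    moreover have "cmod (f x - F n x) < e/2" using hn \<open>x \<in> topspace X\<close> by (simp add: norm_minus_commute)
    ultimately show "e/2 \<le> cmod (F n x)" using norm_triangle_ineq2[of "f x" "F n x"] by linarith
  qed
  then show "compactin X {x \<in> topspace X. e \<le> cmod (f x)}"
    using closedin_ge_norm[OF c] closed_compactin C0_D(2)[OF F[of n], of "e/2"] e by (meson e half_gt_zero)
qed (use out in auto)

lemma bump:
  assumes H: "Hausdorff_space X" and L: "locally_compact_space X"
    and C: "closedin X C" and x: "x \<in> topspace X" "x \<notin> C"
  shows "\<exists>h. h \<in> C0 X \<and> h x = 1 \<and> (\<forall>y. cmod (h y) \<le> 1) \<and> (\<forall>y\<in>C. h y = 0)"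
proof -
  have reg: "regular_space X"
    using H L locally_compact_Hausdorff_imp_regular_space by blast
  then have nbase: "neighbourhood_base_of (\<lambda>C. compactin X C \<and> closedin X C) X"
    using L locally_compact_regular_space_neighbourhood_base by blast
  then obtain U M where "openin X U" "compactin X M" "closedin X M" "x \<in> U" "U \<subseteq> M" "M \<subseteq> topspace X - C"
    unfolding neighbourhood_base_of by (metis (no_types, lifting) Diff_iff C x closedin_def)
  have cr: "completely_regular_space X"
    using L H locally_compact_regular_imp_completely_regular_space by blast
  have "closedin X (topspace X - U)" using \<open>openin X U\<close> by blast
  then obtain f :: "'a \<Rightarrow> real" where f: "continuous_map X (top_of_set {0..1}) f" "f x = 0" "f ` (topspace X - U) \<subseteq> {1}"
    using cr x \<open>x \<in> U\<close> unfolding completely_regular_space_def by blast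
  have fr: "continuous_map X euclideanreal f" using f(1) continuous_map_into_fulltopology by blast
  have f01: "f y \<in> {0..1}" if "y \<in> topspace X" for y
    using f(1) that by (auto simp: continuous_map_def)
  define h where "h = (\<lambda>y. if y \<in> topspace X then complex_of_real (1 - f y) else 0)"
  have hc: "continuous_map X euclidean h"
  proof -
    have "continuous_map X euclidean (\<lambda>y. complex_of_real (1 - f y))"
      using fr by (simp add: continuous_map_atin tendsto_of_real tendsto_diff)
    then show ?thesis by (rule continuous_map_eq) (simp add: h_def)
  qed
  have hout: "h y = 0" if "y \<notin> U" for y
  proof (cases "y \<in> topspace X")
    case True then have "f y = 1" using f(3) that by auto
    then show ?thesis by (simp add: h_def)
  qed (simp add: h_def)
  have "M \<subseteq> topspace X" using \<open>M \<subseteq> topspace X - C\<close> by blast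
  show ?thesis
  proof (intro exI conjI ballI allI)
    show "h \<in> C0 X"
    proof (intro C0_I)
      fix e :: real assume e: "e > 0"
      have "{y \<in> topspace X. e \<le> cmod (h y)} \<subseteq> M"
        using hout e \<open>U \<subseteq> M\<close> by (smt (verit) mem_Collect_eq norm_zero subsetD subsetI)
      then show "compactin X {y \<in> topspace X. e \<le> cmod (h y)}"
        using closedin_ge_norm[OF hc] closed_compactin \<open>compactin X M\<close> by blast
    qed (use hc in \<open>auto simp: h_def\<close>)
    show "h x = 1" using x f(2) by (simp add: h_def)
    fix y
    have "cmod (complex_of_real (1 - f y)) \<le> 1" if "y \<in> topspace X"
      using f01[OF that] by (simp only: norm_of_real) auto
    then show "cmod (h y) \<le> 1" by (auto simp: h_def)
  next
    fix y assume "y \<in> C"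
    then show "h y = 0" using hout \<open>U \<subseteq> M\<close> \<open>M \<subseteq> topspace X - C\<close> by blast
  qed
qed

lemma C0_clamp:
  assumes "G \<in> C0 X"
  defines "h \<equiv> (\<lambda>y. G y / complex_of_real (max 1 (cmod (G y))))"
  shows "h \<in> C0 X" "\<And>y. cmod (h y) \<le> 1" "\<And>y. cmod (G y) \<le> 1 \<Longrightarrow> h y = G y"
    "\<And>y. cmod (h y) \<le> cmod (G y)"
proof -
  have nh: "cmod (h y) = cmod (G y) / max 1 (cmod (G y))" for y
    unfolding h_def by (simp add: norm_divide)
  have mp: "0 < max 1 (cmod (G y))" for y by (rule less_le_trans[OF zero_less_one max.cobounded1])
  show le1: "cmod (h y) \<le> 1" for y unfolding nh
    using pos_divide_le_eq[OF mp[of y], of "cmod (G y)"] by simp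
  show leG: "cmod (h y) \<le> cmod (G y)" for y unfolding nh
  proof -
    have "cmod (G y) * 1 \<le> cmod (G y) * max 1 (cmod (G y))" by (rule mult_left_mono) auto
    then show "cmod (G y) / max 1 (cmod (G y)) \<le> cmod (G y)"
      using pos_divide_le_eq[OF mp[of y], of "cmod (G y)"] by simp
  qed
  show "cmod (G y) \<le> 1 \<Longrightarrow> h y = G y" for y unfolding h_def
  proof -
    assume "cmod (G y) \<le> 1"
    then have "max 1 (cmod (G y)) = 1" by (rule max_absorb1)
    then show "G y / complex_of_real (max 1 (cmod (G y))) = G y" by simp
  qed
  have c1: "continuous_on UNIV (\<lambda>w::complex. max 1 (cmod w))"
    by (intro continuous_on_max continuous_on_const continuous_on_norm continuous_on_id)
  have c2: "continuous_on UNIV (\<lambda>w::complex. complex_of_real (max 1 (cmod w)))"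
    using continuous_on_of_real_o_iff[of UNIV "\<lambda>w::complex. max 1 (cmod w)"] c1 by (simp add: o_def)
  have nz: "\<forall>w\<in>UNIV. complex_of_real (max 1 (cmod (w::complex))) \<noteq> 0"
    using max.cobounded1[of 1] by (metis not_one_le_zero of_real_eq_0_iff)
  have cc: "continuous_on UNIV (\<lambda>w::complex. w / complex_of_real (max 1 (cmod w)))"
    by (rule continuous_on_divide[OF continuous_on_id c2 nz])
  have hc: "continuous_map X euclidean h"
  proof -
    have "continuous_map X euclidean ((\<lambda>w::complex. w / complex_of_real (max 1 (cmod w))) \<circ> G)"
      using C0_D(1)[OF assms(1)] cc by (intro continuous_map_compose) auto
    then show ?thesis by (simp add: h_def o_def)
  qed
  show "h \<in> C0 X"
  proof (intro C0_I hc)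
    fix e :: real assume e: "e > 0"
    have "{y \<in> topspace X. e \<le> cmod (h y)} \<subseteq> {y \<in> topspace X. e \<le> cmod (G y)}"
      using leG order_trans by blast
    then show "compactin X {y \<in> topspace X. e \<le> cmod (h y)}"
      using closedin_ge_norm[OF hc] closed_compactin C0_D(2)[OF assms(1) e] by blast
  next
    fix y assume "y \<notin> topspace X" then show "h y = 0" using C0_D(3)[OF assms(1)] by (simp add: h_def)
  qed
qed

lemma interp:
  assumes H: "Hausdorff_space X" and L: "locally_compact_space X"
    and C: "closedin X C" and I: "finite I" "inj_on z I" "z ` I \<subseteq> topspace X - C"
    and u: "\<And>i. i \<in> I \<Longrightarrow> cmod (u i) \<le> 1"
  shows "\<exists>h. h \<in> C0 X \<and> (\<forall>y. cmod (h y) \<le> 1) \<and> (\<forall>i\<in>I. h (z i) = u i) \<and> (\<forall>y\<in>C. h y = 0)"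
proof -
  have t1: "t1_space X" using H Hausdorff_imp_t1_space by blast
  have ex: "\<forall>i\<in>I. \<exists>b. b \<in> C0 X \<and> b (z i) = 1 \<and> (\<forall>y\<in>C \<union> z ` (I - {i}). b y = 0)"
  proof
    fix i assume i: "i \<in> I"
    have fin: "finite (z ` (I - {i}))" using I(1) by simp
    have sub: "z ` (I - {i}) \<subseteq> topspace X" using I(3) by blast
    have "closedin X (z ` (I - {i}))"
      using t1 fin sub unfolding t1_space_closedin_finite by blast
    then have cl: "closedin X (C \<union> z ` (I - {i}))" by (rule closedin_Un[OF C])
    have zi: "z i \<in> topspace X" using I(3) i by blast
    have "z i \<notin> C" using I(3) i by blast
    moreover have "z i \<notin> z ` (I - {i})"
    proof
      assume "z i \<in> z ` (I - {i})"
      then obtain j where "j \<in> I - {i}" "z i = z j" by blast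
      then show False using inj_onD[OF I(2)] i by blast
    qed
    ultimately have "z i \<notin> C \<union> z ` (I - {i})" by blast
    from bump[OF H L cl zi this]
    show "\<exists>b. b \<in> C0 X \<and> b (z i) = 1 \<and> (\<forall>y\<in>C \<union> z ` (I - {i}). b y = 0)"
      by blast
  qed
  from bchoice[OF ex] obtain b where b0: "\<forall>i\<in>I. b i \<in> C0 X \<and> b i (z i) = 1 \<and> (\<forall>y\<in>C \<union> z ` (I - {i}). b i y = 0)"
    by blast
  then have b: "\<And>i. i \<in> I \<Longrightarrow> b i \<in> C0 X \<and> b i (z i) = 1 \<and> (\<forall>y\<in>C \<union> z ` (I - {i}). b i y = 0)"
    by blast
  define G where "G = (\<lambda>y. \<Sum>i\<in>I. u i * b i y)"
  have GC0: "G \<in> C0 X" unfolding G_def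
    using I b by (intro C0_sum C0_scale) auto
  have Gz: "G (z j) = u j" if "j \<in> I" for j
  proof -
    have "G (z j) = (\<Sum>i\<in>I. if i = j then u j else 0)" unfolding G_def
    proof (intro sum.cong refl)
      fix i assume "i \<in> I"
      then show "u i * b i (z j) = (if i = j then u j else 0)"
        using b[of i] that by auto
    qed
    also have "\<dots> = u j" using that I by simp
    finally show ?thesis .
  qed
  have GC: "G y = 0" if "y \<in> C" for y unfolding G_def using b that by simp
  define h where "h \<equiv> (\<lambda>y. G y / complex_of_real (max 1 (cmod (G y))))"
  show ?thesis
  proof (intro exI conjI allI ballI)
    show "h \<in> C0 X" unfolding h_def by (rule C0_clamp(1)[OF GC0])
    show "cmod (h y) \<le> 1" for y unfolding h_def by (rule C0_clamp(2)[OF GC0])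
    show "h (z i) = u i" if "i \<in> I" for i
      unfolding h_def using C0_clamp(3)[OF GC0, of "z i"] Gz[OF that] u[OF that] by simp
    show "h y = 0" if "y \<in> C" for y unfolding h_def using GC[OF that] by simp
  qed
qed


definition Ser :: "'a topology \<Rightarrow> (nat \<Rightarrow> complex) \<Rightarrow> (nat \<Rightarrow> 'a \<Rightarrow> 'a) \<Rightarrow> ('a \<Rightarrow> complex) \<Rightarrow> ('a \<Rightarrow> complex)" where
  "Ser X c \<phi> g = (\<lambda>x. if x \<in> topspace X then (\<Sum>k. c k * g (\<phi> k x)) else 0)"

lemma ser_basic:
  assumes c: "summable (\<lambda>k. cmod (c k))" and g: "g \<in> C0 X"
  shows "summable (\<lambda>k. c k * g (\<phi> k x))"
    "cmod (\<Sum>k. c k * g (\<phi> k x)) \<le> (\<Sum>k. cmod (c k)) * sup_norm X g"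
proof -
  have b: "norm (c k * g (\<phi> k x)) \<le> cmod (c k) * sup_norm X g" for k
    unfolding norm_mult by (rule mult_left_mono[OF sup_norm_ge[OF g]]) simp
  have s: "summable (\<lambda>k. cmod (c k) * sup_norm X g)" by (rule summable_mult2[OF c])
  show "summable (\<lambda>k. c k * g (\<phi> k x))"
    by (rule summable_comparison_test'[OF s b])
  have "cmod (\<Sum>k. c k * g (\<phi> k x)) \<le> (\<Sum>k. cmod (c k) * sup_norm X g)"
    by (rule norm_suminf_le[OF b s])
  also have "\<dots> = (\<Sum>k. cmod (c k)) * sup_norm X g" by (rule suminf_mult2[OF c, symmetric])
  finally show "cmod (\<Sum>k. c k * g (\<phi> k x)) \<le> (\<Sum>k. cmod (c k)) * sup_norm X g" .
qed

lemma ser_C0: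
  assumes \<phi>: "\<And>k. continuous_map X X (\<phi> k)" "\<And>k. proper_map X X (\<phi> k)"
    and c: "summable (\<lambda>k. cmod (c k))" and g: "g \<in> C0 X"
  shows "Ser X c \<phi> g \<in> C0 X"
proof (rule C0_unif[where F="\<lambda>N x. \<Sum>k<N. c k * compf X (\<phi> k) g x"])
  fix N
  show "(\<lambda>x. \<Sum>k<N. c k * compf X (\<phi> k) g x) \<in> C0 X"
    by (intro C0_sum C0_scale C0_comp \<phi> g) auto
next
  fix x assume "x \<notin> topspace X" then show "Ser X c \<phi> g x = 0" by (simp add: Ser_def)
next
  fix e :: real assume e: "e > 0"
  define B where "B = sup_norm X g"
  have B0: "0 \<le> B" unfolding B_def by (rule sup_norm_nonneg[OF g])
  have r: "0 < e / (B + 1)" using e B0 by simp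
  obtain N where N: "\<And>n. n \<ge> N \<Longrightarrow> norm (\<Sum>i. cmod (c (i + n))) < e / (B + 1)"
    using suminf_exist_split[OF r c] by blast
  show "\<forall>\<^sub>F n in sequentially. \<forall>x\<in>topspace X. cmod ((\<Sum>k<n. c k * compf X (\<phi> k) g x) - Ser X c \<phi> g x) < e"
  proof (rule eventually_sequentiallyI[of N], intro ballI)
    fix n x assume n: "N \<le> n" and x: "x \<in> topspace X"
    have sm: "summable (\<lambda>k. c k * g (\<phi> k x))" by (rule ser_basic(1)[OF c g])
    have cn: "summable (\<lambda>k. cmod (c (k + n)))" by (rule summable_ignore_initial_segment[OF c])
    have "(\<Sum>k<n. c k * compf X (\<phi> k) g x) - Ser X c \<phi> g x = (\<Sum>k<n. c k * g (\<phi> k x)) - (\<Sum>k. c k * g (\<phi> k x))"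
      using x by (simp add: Ser_def compf_def)
    also have "\<dots> = - (\<Sum>k. c (k + n) * g (\<phi> (k + n) x))"
      using suminf_split_initial_segment[OF sm, of n] by simp
    finally have eq: "(\<Sum>k<n. c k * compf X (\<phi> k) g x) - Ser X c \<phi> g x = - (\<Sum>k. c (k + n) * g (\<phi> (k + n) x))" .
    have "cmod (\<Sum>k. c (k + n) * g (\<phi> (k + n) x)) \<le> (\<Sum>k. cmod (c (k + n))) * B"
      unfolding B_def by (rule ser_basic(2)[OF cn g])
    also have "\<dots> \<le> e / (B + 1) * B"
      using N[OF n] B0 by (intro mult_right_mono) auto
    also have "\<dots> < e"
      using e B0 by (simp add: field_simps)
    finally show "cmod ((\<Sum>k<n. c k * compf X (\<phi> k) g x) - Ser X c \<phi> g x) < e"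
      unfolding eq by simp
  qed
qed

lemma ser_bounded_op:
  assumes \<phi>: "\<And>k. continuous_map X X (\<phi> k)" "\<And>k. proper_map X X (\<phi> k)"
    and c: "summable (\<lambda>k. cmod (c k))"
  shows "bounded_op X (Ser X c \<phi>)"
  unfolding bounded_op_def
proof (intro conjI ballI allI exI)
  fix f assume f: "f \<in> C0 X"
  show "Ser X c \<phi> f \<in> C0 X" by (rule ser_C0[OF \<phi> c f])
  fix a :: complex
  show "Ser X c \<phi> (\<lambda>x. a * f x) = (\<lambda>x. a * Ser X c \<phi> f x)"
  proof
    fix x
    show "Ser X c \<phi> (\<lambda>x. a * f x) x = a * Ser X c \<phi> f x"
      using suminf_mult[OF ser_basic(1)[OF c f, of \<phi> x], of a]
      by (simp add: Ser_def algebra_simps)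
  qed
next
  fix f g assume f: "f \<in> C0 X" and g: "g \<in> C0 X"
  show "Ser X c \<phi> (\<lambda>x. f x + g x) = (\<lambda>x. Ser X c \<phi> f x + Ser X c \<phi> g x)"
  proof
    fix x
    show "Ser X c \<phi> (\<lambda>x. f x + g x) x = Ser X c \<phi> f x + Ser X c \<phi> g x"
      using suminf_add[OF ser_basic(1)[OF c f, of \<phi> x] ser_basic(1)[OF c g, of \<phi> x]]
      by (simp add: Ser_def algebra_simps)
  qed
next
  fix f assume f: "f \<in> C0 X"
  show "sup_norm X (Ser X c \<phi> f) \<le> (\<Sum>k. cmod (c k)) * sup_norm X f"
  proof (rule sup_norm_le)
    show "0 \<le> (\<Sum>k. cmod (c k)) * sup_norm X f"
      using suminf_nonneg[OF c] sup_norm_nonneg[OF f] by simp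
    fix x assume "x \<in> topspace X"
    then show "cmod (Ser X c \<phi> f x) \<le> (\<Sum>k. cmod (c k)) * sup_norm X f"
      using ser_basic(2)[OF c f] by (simp add: Ser_def)
  qed
qed

lemma telescope_suminf:
  fixes a :: "nat \<Rightarrow> complex"
  assumes "summable a"
  shows "(\<Sum>k. a k - a (Suc k)) = a 0"
proof -
  have s1: "summable (\<lambda>k. a (Suc k))" using assms by (simp add: summable_Suc_iff)
  have "(\<Sum>k. a k - a (Suc k)) = suminf a - (\<Sum>k. a (Suc k))"
    by (rule suminf_diff[OF assms s1, symmetric])
  also have "\<dots> = a 0" using suminf_split_head[OF assms] by simp
  finally show ?thesis .
qed


lemma iter_cont: "continuous_map X X \<tau> \<Longrightarrow> continuous_map X X (\<tau> ^^ n)"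
  by (induction n) (auto intro: continuous_map_compose)

lemma iter_proper: "proper_map X X \<tau> \<Longrightarrow> proper_map X X (\<tau> ^^ n)"
  by (induction n) (auto intro: proper_map_compose simp: id_def[symmetric])

lemma iter_top: "continuous_map X X \<tau> \<Longrightarrow> x \<in> topspace X \<Longrightarrow> (\<tau> ^^ n) x \<in> topspace X"
  by (induction n) (auto simp: continuous_map_def Pi_iff)

lemma geo_summable:
  fixes l :: complex
  assumes "cmod l < 1"
  shows "summable (\<lambda>k. cmod l ^ k)" "summable (\<lambda>k. cmod (l ^ Suc k))"
proof -
  show s: "summable (\<lambda>k. cmod l ^ k)" using assms by (intro summable_geometric) simp
  show "summable (\<lambda>k. cmod (l ^ Suc k))"
    using summable_mult[OF s, of "cmod l"] by (simp add: norm_power norm_mult)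
qed

lemma neu_tel:
  fixes l :: complex
  assumes l: "1 < cmod l" and h: "h \<in> C0 X"
  shows "(\<Sum>k. - ((1/l) ^ Suc k) * h ((\<tau> ^^ Suc k) x) - l * (- ((1/l) ^ Suc k) * h ((\<tau> ^^ k) x))) = h x"
proof -
  have l0: "l \<noteq> 0" using l by auto
  define a where "a = (\<lambda>k. (1/l) ^ k * h ((\<tau> ^^ k) x))"
  have il: "cmod (1/l) < 1" using l by (simp add: norm_divide divide_less_eq)
  have "summable a"
  proof (rule summable_comparison_test')
    show "summable (\<lambda>k. cmod (1/l) ^ k * sup_norm X h)"
      by (rule summable_mult2[OF geo_summable(1)[OF il]])
    fix k
    show "norm (a k) \<le> cmod (1/l) ^ k * sup_norm X h"
      unfolding a_def norm_mult norm_power by (rule mult_left_mono[OF sup_norm_ge[OF h]]) simp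
  qed
  then have "(\<Sum>k. a k - a (Suc k)) = a 0" by (rule telescope_suminf)
  moreover have "a k - a (Suc k) = - ((1/l) ^ Suc k) * h ((\<tau> ^^ Suc k) x) - l * (- ((1/l) ^ Suc k) * h ((\<tau> ^^ k) x))" for k
    unfolding a_def using l0 by (simp add: field_simps)
  ultimately show ?thesis unfolding a_def by simp
qed

lemma not_spec_big:
  fixes l :: complex
  assumes cont: "continuous_map X X \<tau>" and pr: "proper_map X X \<tau>" and l: "1 < cmod l"
  shows "l \<notin> op_spectrum X (comp_op X \<tau>)"
proof -
  define c where "c = (\<lambda>k. - ((1/l) ^ Suc k))"
  have il: "cmod (1/l) < 1" using l by (simp add: norm_divide divide_less_eq)
  have cs: "summable (\<lambda>k. cmod (c k))" unfolding c_def using geo_summable(2)[OF il] by simp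
  define S where "S = Ser X c (\<lambda>k. \<tau> ^^ k)"
  have bo: "bounded_op X S" unfolding S_def
    by (rule ser_bounded_op[OF iter_cont[OF cont] iter_proper[OF pr] cs])
  have 1: "S (\<lambda>x. comp_op X \<tau> f x - l * f x) = f" if f: "f \<in> C0 X" for f
  proof
    fix x show "S (\<lambda>x. comp_op X \<tau> f x - l * f x) x = f x"
    proof (cases "x \<in> topspace X")
      case False then show ?thesis using C0_D(3)[OF f] by (simp add: S_def Ser_def)
    next
      case True
      have "S (\<lambda>x. comp_op X \<tau> f x - l * f x) x = (\<Sum>k. c k * (comp_op X \<tau> f ((\<tau>^^k) x) - l * f ((\<tau>^^k) x)))"
        using True by (simp add: S_def Ser_def)
      also have "\<dots> = (\<Sum>k. - ((1/l) ^ Suc k) * f ((\<tau> ^^ Suc k) x) - l * (- ((1/l) ^ Suc k) * f ((\<tau> ^^ k) x)))"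
        using iter_top[OF cont True] by (simp add: comp_op_def c_def algebra_simps)
      also have "\<dots> = f x" by (rule neu_tel[OF l f])
      finally show ?thesis .
    qed
  qed
  have 2: "(\<lambda>x. comp_op X \<tau> (S g) x - l * S g x) = g" if g: "g \<in> C0 X" for g
  proof
    fix x show "comp_op X \<tau> (S g) x - l * S g x = g x"
    proof (cases "x \<in> topspace X")
      case False then show ?thesis using C0_D(3)[OF g] by (simp add: S_def Ser_def comp_op_def)
    next
      case True
      have tx: "\<tau> x \<in> topspace X" using cont True by (auto simp: continuous_map_def)
      have sm1: "summable (\<lambda>k. c k * g ((\<tau>^^ Suc k) x))" by (rule ser_basic(1)[OF cs g])
      have sm2: "summable (\<lambda>k. l * (c k * g ((\<tau>^^ k) x)))" by (rule summable_mult[OF ser_basic(1)[OF cs g]])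
      have "comp_op X \<tau> (S g) x - l * S g x = (\<Sum>k. c k * g ((\<tau>^^ Suc k) x)) - (\<Sum>k. l * (c k * g ((\<tau>^^ k) x)))"
        using True tx suminf_mult[OF ser_basic(1)[OF cs g, of "\<lambda>k. \<tau>^^k" x], of l]
        by (simp add: comp_op_def S_def Ser_def funpow_Suc_right del: funpow.simps)
      also have "\<dots> = (\<Sum>k. c k * g ((\<tau>^^ Suc k) x) - l * (c k * g ((\<tau>^^ k) x)))"
        by (rule suminf_diff[OF sm1 sm2])
      also have "\<dots> = g x" unfolding c_def by (rule neu_tel[OF l g])
      finally show ?thesis .
    qed
  qed
  show ?thesis unfolding op_spectrum_def using bo 1 2 by blast
qed


lemma bounded_op_K:
  assumes "bounded_op X S"
  shows "\<exists>K\<ge>0. \<forall>f\<in>C0 X. S f \<in> C0 X \<and> sup_norm X (S f) \<le> K * sup_norm X f"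
proof -
  obtain K where K: "\<forall>f\<in>C0 X. sup_norm X (S f) \<le> K * sup_norm X f"
    using assms unfolding bounded_op_def by blast
  have "sup_norm X (S f) \<le> max K 0 * sup_norm X f" if "f \<in> C0 X" for f
    using K that sup_norm_nonneg[OF that] by (meson max.cobounded1 mult_right_mono order_trans)
  then show ?thesis using assms unfolding bounded_op_def by (intro exI[of _ "max K 0"]) auto
qed

lemma bounded_op_scale:
  assumes "bounded_op X S" "f \<in> C0 X"
  shows "S (\<lambda>x. c * f x) = (\<lambda>x. c * S f x)"
  using assms unfolding bounded_op_def by blast

lemma iter_image_closed:
  assumes "proper_map X X \<tau>"
  shows "closedin X ((\<tau> ^^ n) ` topspace X)"
  using proper_imp_closed_map[OF iter_proper[OF assms, of n]] unfolding closed_map_def by blast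

lemma iter_image_mono:
  assumes cont: "continuous_map X X \<tau>" and "m \<le> n"
  shows "(\<tau> ^^ n) ` topspace X \<subseteq> (\<tau> ^^ m) ` topspace X"
proof
  fix y assume "y \<in> (\<tau> ^^ n) ` topspace X"
  then obtain w where w: "w \<in> topspace X" "y = (\<tau> ^^ n) w" by blast
  have "n = m + (n - m)" using assms(2) by simp
  then have "(\<tau> ^^ n) w = (\<tau> ^^ m) ((\<tau> ^^ (n - m)) w)"
    by (metis comp_apply funpow_add)
  then show "y \<in> (\<tau> ^^ m) ` topspace X" using w iter_top[OF cont] by blast
qed

lemma primal:
  fixes l :: complex
  assumes H: "Hausdorff_space X" and L: "locally_compact_space X"
    and cont: "continuous_map X X \<tau>" and pr: "proper_map X X \<tau>"
    and S: "bounded_op X S" "\<forall>f\<in>C0 X. S (\<lambda>x. comp_op X \<tau> f x - l * f x) = f"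
    and K: "0 \<le> K" "\<forall>f\<in>C0 X. sup_norm X (S f) \<le> K * sup_norm X f"
    and z: "z \<in> topspace X" "(\<tau> ^^ n) z \<notin> (\<tau> ^^ Suc n) ` topspace X"
    and u: "\<And>j. j \<le> n \<Longrightarrow> cmod (u j) \<le> 1"
  shows "cmod (\<Sum>j\<le>n. l ^ (n - j) * u j) \<le> K * cmod l ^ Suc n"
proof -
  define C where "C = (\<tau> ^^ Suc n) ` topspace X"
  have Ccl: "closedin X C" unfolding C_def by (rule iter_image_closed[OF pr])
  define zz where "zz = (\<lambda>j. (\<tau> ^^ j) z)"
  have zC: "zz j \<notin> C" if "j \<le> n" for j
  proof
    assume "zz j \<in> C"
    then have "(\<tau> ^^ (n - j)) (zz j) \<in> (\<tau> ^^ (n - j)) ` C" by blast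
    also have "\<dots> \<subseteq> (\<tau> ^^ (n - j + Suc n)) ` topspace X"
      unfolding C_def image_comp funpow_add[symmetric] by (rule subset_refl)
    also have "\<dots> \<subseteq> C" unfolding C_def by (rule iter_image_mono[OF cont]) simp
    finally have "(\<tau> ^^ (n - j)) (zz j) \<in> C" .
    moreover have "(\<tau> ^^ (n - j)) (zz j) = (\<tau> ^^ n) z"
    proof -
      have "n = (n - j) + j" using that by simp
      then show ?thesis unfolding zz_def by (metis comp_apply funpow_add)
    qed
    ultimately show False using z(2) C_def by simp
  qed
  have inj: "inj_on zz {..n}"
  proof (rule inj_onI)
    have *: "False" if ij: "i < j" "j \<le> n" "zz i = zz j" for i j
    proof -
      have "(\<tau> ^^ (n - i)) (zz i) = (\<tau> ^^ n) z"
      proof -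
        have "n = (n - i) + i" using ij by simp
        then show ?thesis unfolding zz_def by (metis comp_apply funpow_add)
      qed
      moreover have "(\<tau> ^^ (n - i)) (zz j) = (\<tau> ^^ Suc n) ((\<tau> ^^ (j - i - 1)) z)"
      proof -
        have e: "n - i + j = Suc n + (j - i - 1)" using ij by simp
        have "(\<tau> ^^ (n - i)) ((\<tau> ^^ j) z) = (\<tau> ^^ (n - i + j)) z" by (simp only: funpow_add comp_apply)
        also have "\<dots> = (\<tau> ^^ (Suc n + (j - i - 1))) z" using e by (simp only:)
        also have "\<dots> = (\<tau> ^^ Suc n) ((\<tau> ^^ (j - i - 1)) z)" by (simp only: funpow_add comp_apply)
        finally show ?thesis unfolding zz_def .
      qed
      ultimately have "(\<tau> ^^ n) z \<in> (\<tau> ^^ Suc n) ` topspace X"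
        using ij(3) iter_top[OF cont z(1)] by (metis image_eqI)
      then show False using z(2) by blast
    qed
    fix i j assume "i \<in> {..n}" "j \<in> {..n}" "zz i = zz j"
    then show "i = j" using *[of i j] *[of j i] by (cases i j rule: linorder_cases) auto
  qed
  have ztop: "zz ` {..n} \<subseteq> topspace X - C"
    using zC iter_top[OF cont z(1)] by (auto simp: zz_def)
  obtain h where h: "h \<in> C0 X" "\<forall>y. cmod (h y) \<le> 1" "\<forall>j\<in>{..n}. h (zz j) = u j" "\<forall>y\<in>C. h y = 0"
    using interp[OF H L Ccl _ inj ztop, of u] u by auto
  define f where "f = (\<lambda>x. \<Sum>j\<le>n. l ^ (n - j) * compf X (\<tau> ^^ j) h x)"
  have fC0: "f \<in> C0 X" unfolding f_def
    by (intro C0_sum C0_scale C0_comp iter_cont[OF cont] iter_proper[OF pr] h(1)) auto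
  have eq: "(\<lambda>x. comp_op X \<tau> f x - l * f x) = (\<lambda>x. (- (l ^ Suc n)) * h x)"
  proof
    fix x show "comp_op X \<tau> f x - l * f x = (- (l ^ Suc n)) * h x"
    proof (cases "x \<in> topspace X")
      case False then show ?thesis using C0_D(3)[OF h(1)] by (simp add: comp_op_def f_def compf_def)
    next
      case True
      have tx: "\<tau> x \<in> topspace X" using cont True by (auto simp: continuous_map_def)
      define A where "A = (\<lambda>j. l ^ (Suc n - j) * h ((\<tau> ^^ j) x))"
      have 1: "comp_op X \<tau> f x = (\<Sum>j<Suc n. A (Suc j))"
        using True tx unfolding A_def lessThan_Suc_atMost
        by (simp add: comp_op_def f_def compf_def funpow_Suc_right del: funpow.simps)
      have 2: "l * f x = (\<Sum>j<Suc n. A j)"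
        unfolding A_def lessThan_Suc_atMost f_def compf_def sum_distrib_left
      proof (rule sum.cong[OF refl])
        fix j assume "j \<in> {..n}"
        then have "Suc n - j = Suc (n - j)" by simp
        then show "l * (l ^ (n - j) * (if x \<in> topspace X then h ((\<tau> ^^ j) x) else 0)) = l ^ (Suc n - j) * h ((\<tau> ^^ j) x)"
          using True by simp
      qed
      have "comp_op X \<tau> f x - l * f x = (\<Sum>j<Suc n. A (Suc j) - A j)"
        unfolding 1 2 by (rule sum_subtractf[symmetric])
      also have "\<dots> = A (Suc n) - A 0" by (rule sum_lessThan_telescope)
      also have "A (Suc n) = 0" unfolding A_def using h(4) True by (auto simp: C_def)
      finally show ?thesis by (simp add: A_def)
    qed
  qed
  have "f = S (\<lambda>x. comp_op X \<tau> f x - l * f x)" using S(2) fC0 by simp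
  also have "\<dots> = (\<lambda>x. (- (l ^ Suc n)) * S h x)" unfolding eq by (rule bounded_op_scale[OF S(1) h(1)])
  finally have fz: "f z = (- (l ^ Suc n)) * S h z" by simp
  have Sh: "S h \<in> C0 X" using S(1) h(1) unfolding bounded_op_def by blast
  have "sup_norm X h \<le> 1" using h(2) by (intro sup_norm_le) auto
  then have "sup_norm X (S h) \<le> K" using K h(1) by (meson mult_left_mono mult_right_le_one_le order_trans sup_norm_nonneg)
  then have "cmod (S h z) \<le> K" using sup_norm_ge[OF Sh, of z] by simp
  have "f z = (\<Sum>j\<le>n. l ^ (n - j) * u j)"
    unfolding f_def compf_def using z(1) h(3) by (simp add: zz_def)
  then have "cmod (\<Sum>j\<le>n. l ^ (n - j) * u j) = cmod (l ^ Suc n) * cmod (S h z)"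
    using fz by (metis norm_minus_cancel norm_mult)
  also have "\<dots> \<le> cmod l ^ Suc n * K"
    using \<open>cmod (S h z) \<le> K\<close> unfolding norm_power[symmetric] by (rule mult_left_mono) simp
  finally show ?thesis by (simp add: mult.commute)
qed


lemma dual:
  fixes l :: complex
  assumes H: "Hausdorff_space X" and L: "locally_compact_space X"
    and cont: "continuous_map X X \<tau>"
    and S: "bounded_op X S" "\<forall>g\<in>C0 X. (\<lambda>x. comp_op X \<tau> (S g) x - l * S g x) = g"
    and K: "0 \<le> K" "\<forall>f\<in>C0 X. sup_norm X (S f) \<le> K * sup_norm X f"
    and a: "\<And>k. a k \<in> topspace X" "\<And>k. \<tau> (a (Suc k)) = a k"
    and b: "\<And>k. b k \<in> topspace X" "\<And>k. \<tau> (b (Suc k)) = b k"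
    and ab: "\<tau> (a 0) = \<tau> (b 0)"
    and binj: "inj_on b {..n}" and disj: "\<And>j k. j \<le> n \<Longrightarrow> k \<le> n \<Longrightarrow> a j \<noteq> b k"
    and u: "\<And>k. k \<le> n \<Longrightarrow> cmod (u k) \<le> 1"
  shows "cmod (\<Sum>k\<le>n. l ^ k * u k) \<le> 2 * K * cmod l ^ Suc n"
proof -
  have t1: "t1_space X" using H Hausdorff_imp_t1_space by blast
  define C where "C = a ` {..n}"
  have Ccl: "closedin X C"
    using t1 a(1) unfolding t1_space_closedin_finite C_def by auto
  have btop: "b ` {..n} \<subseteq> topspace X - C"
    using b(1) disj unfolding C_def by (force simp: image_iff)
  obtain g where g: "g \<in> C0 X" "\<forall>y. cmod (g y) \<le> 1" "\<forall>k\<in>{..n}. g (b k) = u k" "\<forall>y\<in>C. g y = 0"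
    using interp[OF H L Ccl _ binj btop, of u] u by auto
  define f where "f = S g"
  have fC0: "f \<in> C0 X" using S(1) g(1) unfolding bounded_op_def f_def by blast
  have gx: "g x = f (\<tau> x) - l * f x" if "x \<in> topspace X" for x
  proof -
    have "(\<lambda>x. comp_op X \<tau> (S g) x - l * S g x) = g" using S(2) g(1) by blast
    then have "(\<lambda>x. comp_op X \<tau> (S g) x - l * S g x) x = g x" by (rule fun_cong)
    then show ?thesis using that by (simp add: comp_op_def f_def)
  qed
  have ind: "(\<Sum>k\<le>m. l ^ k * (g (a k) - g (b k))) = - (l ^ Suc m * (f (a m) - f (b m)))" for m
  proof (induction m)
    case 0
    then show ?case using gx[OF a(1)[of 0]] gx[OF b(1)[of 0]] ab by (simp add: algebra_simps)
  next
    case (Suc m)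
    have "(\<Sum>k\<le>Suc m. l ^ k * (g (a k) - g (b k))) =
          - (l ^ Suc m * (f (a m) - f (b m))) + l ^ Suc m * (g (a (Suc m)) - g (b (Suc m)))"
      using Suc by simp
    also have "\<dots> = - (l ^ Suc (Suc m) * (f (a (Suc m)) - f (b (Suc m))))"
    proof -
      have ea: "f (a m) = g (a (Suc m)) + l * f (a (Suc m))"
        using gx[OF a(1)[of "Suc m"]] a(2)[of m] by simp
      have eb: "f (b m) = g (b (Suc m)) + l * f (b (Suc m))"
        using gx[OF b(1)[of "Suc m"]] b(2)[of m] by simp
      show ?thesis unfolding ea eb by (simp add: algebra_simps)
    qed
    finally show ?case .
  qed
  have "(\<Sum>k\<le>n. l ^ k * (g (a k) - g (b k))) = - (\<Sum>k\<le>n. l ^ k * u k)"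
    using g(3,4) unfolding C_def by (simp add: sum_negf[symmetric])
  then have "cmod (\<Sum>k\<le>n. l ^ k * u k) = cmod l ^ Suc n * cmod (f (a n) - f (b n))"
    using ind[of n] by (metis norm_minus_cancel norm_mult norm_power)
  also have "\<dots> \<le> cmod l ^ Suc n * (2 * K)"
  proof (rule mult_left_mono)
    have "sup_norm X g \<le> 1" using g(2) by (intro sup_norm_le) auto
    then have sK: "sup_norm X f \<le> K" unfolding f_def
      using K g(1) by (meson mult_left_mono mult_right_le_one_le order_trans sup_norm_nonneg)
    have "cmod (f (a n) - f (b n)) \<le> cmod (f (a n)) + cmod (f (b n))" by (rule norm_triangle_ineq4)
    also have "\<dots> \<le> K + K" using sup_norm_ge[OF fC0] sK by (meson add_mono order_trans)
    finally show "cmod (f (a n) - f (b n)) \<le> 2 * K" by simp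
  qed simp
  finally show ?thesis by (simp add: mult.commute mult.left_commute)
qed


lemma inv_homeo:
  assumes cont: "continuous_map X X \<tau>" and pr: "proper_map X X \<tau>"
    and Ycl: "closedin X Y" and YY: "\<tau> ` Y = Y" and inj: "inj_on \<tau> Y"
  shows "continuous_map (subtopology X Y) (subtopology X Y) (inv_into Y \<tau>)"
    "proper_map (subtopology X Y) (subtopology X Y) (inv_into Y \<tau>)"
proof -
  let ?Z = "subtopology X Y"
  have Ysub: "Y \<subseteq> topspace X" using Ycl closedin_subset by blast
  have tZ: "topspace ?Z = Y" using Ysub by auto
  have c: "continuous_map ?Z ?Z \<tau>"
    using cont YY unfolding continuous_map_in_subtopology
    by (auto intro: continuous_map_from_subtopology)
  have cl: "closed_map ?Z ?Z \<tau>"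
    using closed_map_into_subtopology[OF closed_map_from_subtopology[OF proper_imp_closed_map[OF pr] Ycl]] YY tZ
    by blast
  have hm: "homeomorphic_map ?Z ?Z \<tau>"
    using bijective_closed_imp_homeomorphic_map[OF c cl] tZ YY inj by simp
  then obtain g where g: "homeomorphic_maps ?Z ?Z \<tau> g" using homeomorphic_map_maps by blast
  then have hg: "homeomorphic_map ?Z ?Z g" and gt: "\<forall>y\<in>Y. \<tau> (g y) = y"
    using homeomorphic_maps_map tZ by metis+
  have "g y = inv_into Y \<tau> y" if "y \<in> Y" for y
  proof -
    have "g y \<in> Y" using g that tZ unfolding homeomorphic_maps_def continuous_map_def by auto
    then show ?thesis using gt that inj by (metis inv_into_f_f)
  qed
  then have "homeomorphic_map ?Z ?Z (inv_into Y \<tau>)" using homeomorphic_map_eq[OF hg] tZ by auto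
  then show "continuous_map ?Z ?Z (inv_into Y \<tau>)" "proper_map ?Z ?Z (inv_into Y \<tau>)"
    by (simp_all add: homeomorphic_imp_continuous_map homeomorphic_imp_proper_map)
qed

lemma psi_maps:
  assumes cont: "continuous_map X X \<tau>" and pr: "proper_map X X \<tau>"
    and Y: "Y = (\<tau> ^^ n0) ` topspace X" and YY: "\<tau> ` Y = Y" and inj: "inj_on \<tau> Y"
  shows "continuous_map X X ((inv_into Y \<tau>) ^^ j \<circ> \<tau> ^^ n0)"
    "proper_map X X ((inv_into Y \<tau>) ^^ j \<circ> \<tau> ^^ n0)"
proof -
  let ?Z = "subtopology X Y" and ?s = "inv_into Y \<tau>"
  have Ycl: "closedin X Y" unfolding Y by (rule iter_image_closed[OF pr])
  have Ysub: "Y \<subseteq> topspace X" using Ycl closedin_subset by blast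
  have sc: "continuous_map ?Z ?Z ?s" and sp: "proper_map ?Z ?Z ?s"
    using inv_homeo[OF cont pr Ycl YY inj] by auto
  have scj: "continuous_map ?Z ?Z (?s ^^ j)" for j
  proof (induction j)
    case (Suc j) show ?case using continuous_map_compose[OF Suc.IH sc] by (simp add: o_def)
  qed simp
  have spj: "proper_map ?Z ?Z (?s ^^ j)" for j
  proof (induction j)
    case (Suc j) show ?case using proper_map_compose[OF Suc.IH sp] by (simp add: o_def)
  qed (simp add: id_def[symmetric])
  have tc: "continuous_map X ?Z (\<tau> ^^ n0)"
    using iter_cont[OF cont] Y unfolding continuous_map_in_subtopology by auto
  have tp: "proper_map X ?Z (\<tau> ^^ n0)"
    using proper_map_into_subtopology[OF iter_proper[OF pr]] Y by auto
  have ic: "continuous_map ?Z X id" by (simp add: continuous_map_from_subtopology)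
  have ip: "proper_map ?Z X id"
    using Ysub Ycl closed_Int_compactin by (subst proper_map_inclusion) auto
  show "continuous_map X X (?s ^^ j \<circ> \<tau> ^^ n0)"
    using continuous_map_compose[OF continuous_map_compose[OF tc scj] ic] by simp
  show "proper_map X X (?s ^^ j \<circ> \<tau> ^^ n0)"
    using proper_map_compose[OF proper_map_compose[OF tp spj] ip] by simp
qed


lemma geo_summ:
  fixes l :: complex
  assumes "cmod l < 1" "h \<in> C0 X"
  shows "summable (\<lambda>j. l ^ j * h (w j))"
proof (rule summable_comparison_test')
  show "summable (\<lambda>k. cmod l ^ k * sup_norm X h)"
    by (rule summable_mult2[OF geo_summable(1)[OF assms(1)]])
  fix k
  show "norm (l ^ k * h (w k)) \<le> cmod l ^ k * sup_norm X h"
    unfolding norm_mult norm_power by (rule mult_left_mono[OF sup_norm_ge[OF assms(2)]]) simp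
qed

lemma geo_tel:
  fixes l :: complex
  assumes "cmod l < 1" "h \<in> C0 X"
  shows "(\<Sum>j. l ^ j * h (w j) - l ^ Suc j * h (w (Suc j))) = h (w 0)"
  using telescope_suminf[OF geo_summ[OF assms, of w]] by simp

lemma not_spec_small:
  fixes l :: complex
  assumes cont: "continuous_map X X \<tau>" and pr: "proper_map X X \<tau>"
    and Y: "Y = (\<tau> ^^ n0) ` topspace X" and YY: "\<tau> ` Y = Y" and inj: "inj_on \<tau> Y"
    and l: "0 < cmod l" "cmod l < 1"
  shows "l \<notin> op_spectrum X (comp_op X \<tau>)"
proof -
  have l0: "l \<noteq> 0" using l by auto
  define s where "s = inv_into Y \<tau>"
  have Ysub: "Y \<subseteq> topspace X" unfolding Y using iter_top[OF cont] by blast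
  have sY: "s y \<in> Y" if "y \<in> Y" for y
    unfolding s_def using that YY by (metis inv_into_into)
  have ts: "\<tau> (s y) = y" if "y \<in> Y" for y
    unfolding s_def using that YY by (metis f_inv_into_f)
  have st: "s (\<tau> y) = y" if "y \<in> Y" for y
    unfolding s_def by (rule inv_into_f_f[OF inj that])
  have sjY: "(s ^^ j) y \<in> Y" if "y \<in> Y" for y j
    using that by (induction j) (auto intro: sY)
  have tsj: "\<tau> ((s ^^ Suc j) y) = (s ^^ j) y" if "y \<in> Y" for y j
    using ts[OF sjY[OF that, of j]] by simp
  have stj: "(s ^^ Suc j) (\<tau> y) = (s ^^ j) y" if "y \<in> Y" for y j
    unfolding funpow_Suc_right comp_apply using st[OF that] by simp
  have tnY: "(\<tau> ^^ n0) x \<in> Y" if "x \<in> topspace X" for x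
    unfolding Y using that by blast
  have tx: "\<tau> x \<in> topspace X" if "x \<in> topspace X" for x
    using cont that by (auto simp: continuous_map_def)
  define \<phi> where "\<phi> = (\<lambda>k. if k < n0 then \<tau> ^^ k else s ^^ Suc (k - n0) \<circ> \<tau> ^^ n0)"
  define c where "c = (\<lambda>k. if k < n0 then - ((1/l) ^ Suc k) else (1/l) ^ n0 * l ^ (k - n0))"
  have \<phi>c: "continuous_map X X (\<phi> k)" and \<phi>p: "proper_map X X (\<phi> k)" for k
    unfolding \<phi>_def s_def using iter_cont[OF cont] iter_proper[OF pr] psi_maps[OF cont pr Y YY inj, of "Suc (k - n0)"]
    by (auto simp del: funpow.simps)
  have cs: "summable (\<lambda>k. cmod (c k))"
  proof -
    have "summable (\<lambda>k. cmod ((1/l) ^ n0) * cmod l ^ k)"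
      by (rule summable_mult[OF geo_summable(1)[OF l(2)]])
    then have "summable (\<lambda>k. cmod (c (k + n0)))"
      by (simp add: c_def norm_mult norm_power)
    then show ?thesis using summable_iff_shift[of "\<lambda>k. cmod (c k)" n0] by blast
  qed
  define S where "S = Ser X c \<phi>"
  have bo: "bounded_op X S" unfolding S_def by (rule ser_bounded_op[OF \<phi>c \<phi>p cs])
  define P where "P = (\<lambda>h x. \<Sum>k<n0. - ((1/l) ^ Suc k) * h ((\<tau> ^^ k) x))"
  define Q where "Q = (\<lambda>h y. \<Sum>j. l ^ j * h ((s ^^ Suc j) y))"
  have Sform: "S h x = P h x + (1/l) ^ n0 * Q h ((\<tau> ^^ n0) x)" if h: "h \<in> C0 X" and x: "x \<in> topspace X" for h x
  proof -
    have sm: "summable (\<lambda>k. c k * h (\<phi> k x))" by (rule ser_basic(1)[OF cs h])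
    have "S h x = (\<Sum>k. c (k + n0) * h (\<phi> (k + n0) x)) + (\<Sum>k<n0. c k * h (\<phi> k x))"
      using x suminf_split_initial_segment[OF sm, of n0] by (simp add: S_def Ser_def)
    also have "(\<Sum>k<n0. c k * h (\<phi> k x)) = P h x"
      unfolding P_def by (rule sum.cong) (auto simp: c_def \<phi>_def)
    also have "(\<Sum>k. c (k + n0) * h (\<phi> (k + n0) x)) = (\<Sum>k. (1/l) ^ n0 * (l ^ k * h ((s ^^ Suc k) ((\<tau> ^^ n0) x))))"
      by (simp add: c_def \<phi>_def mult.assoc)
    also have "\<dots> = (1/l) ^ n0 * Q h ((\<tau> ^^ n0) x)"
      unfolding Q_def by (rule suminf_mult[OF geo_summ[OF l(2) h]])
    finally show ?thesis by simp
  qed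
  have Ptel: "(\<Sum>k<n0. - ((1/l) ^ Suc k) * h ((\<tau> ^^ Suc k) x) - l * (- ((1/l) ^ Suc k) * h ((\<tau> ^^ k) x)))
      = h x - (1/l) ^ n0 * h ((\<tau> ^^ n0) x)" for h x
  proof -
    define A where "A = (\<lambda>k. (1/l) ^ k * h ((\<tau> ^^ k) x))"
    have "(\<Sum>k<n0. - ((1/l) ^ Suc k) * h ((\<tau> ^^ Suc k) x) - l * (- ((1/l) ^ Suc k) * h ((\<tau> ^^ k) x)))
        = (\<Sum>k<n0. A k - A (Suc k))"
      unfolding A_def using l0 by (intro sum.cong refl) (simp add: field_simps)
    also have "\<dots> = A 0 - A n0" by (rule sum_lessThan_telescope')
    finally show ?thesis by (simp add: A_def)
  qed
  have 2: "(\<lambda>x. comp_op X \<tau> (S g) x - l * S g x) = g" if g: "g \<in> C0 X" for g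
  proof
    fix x show "comp_op X \<tau> (S g) x - l * S g x = g x"
    proof (cases "x \<in> topspace X")
      case False then show ?thesis using C0_D(3)[OF g] by (simp add: S_def Ser_def comp_op_def)
    next
      case True
      define y where "y = (\<tau> ^^ n0) x"
      have yY: "y \<in> Y" unfolding y_def by (rule tnY[OF True])
      have ty: "(\<tau> ^^ n0) (\<tau> x) = \<tau> y" unfolding y_def by (simp add: funpow_swap1)
      have Qeq: "Q g (\<tau> y) - l * Q g y = g y"
      proof -
        have "Q g (\<tau> y) = (\<Sum>j. l ^ j * g ((s ^^ j) y))" unfolding Q_def using stj[OF yY] by simp
        moreover have "l * Q g y = (\<Sum>j. l ^ Suc j * g ((s ^^ Suc j) y))"
          unfolding Q_def using suminf_mult[OF geo_summ[OF l(2) g, of "\<lambda>j. (s ^^ Suc j) y"], of l]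
          by (simp add: mult.assoc)
        moreover have "(\<Sum>j. l ^ j * g ((s ^^ j) y)) - (\<Sum>j. l ^ Suc j * g ((s ^^ Suc j) y))
            = (\<Sum>j. l ^ j * g ((s ^^ j) y) - l ^ Suc j * g ((s ^^ Suc j) y))"
        proof (rule suminf_diff)
          show "summable (\<lambda>j. l ^ j * g ((s ^^ j) y))" by (rule geo_summ[OF l(2) g])
          have "summable (\<lambda>j. l * (l ^ j * g ((s ^^ Suc j) y)))"
            by (rule summable_mult[OF geo_summ[OF l(2) g]])
          then show "summable (\<lambda>j. l ^ Suc j * g ((s ^^ Suc j) y))" by (simp add: mult.assoc)
        qed
        moreover have "(\<Sum>j. l ^ j * g ((s ^^ j) y) - l ^ Suc j * g ((s ^^ Suc j) y)) = g y"
          using geo_tel[OF l(2) g, of "\<lambda>j. (s ^^ j) y"] by simp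
        ultimately show ?thesis by simp
      qed
      have Peq: "P g (\<tau> x) - l * P g x = g x - (1/l) ^ n0 * g y"
      proof -
        have "P g (\<tau> x) - l * P g x = (\<Sum>k<n0. - ((1/l) ^ Suc k) * g ((\<tau> ^^ Suc k) x) - l * (- ((1/l) ^ Suc k) * g ((\<tau> ^^ k) x)))"
        proof -
          have e1: "P g (\<tau> x) = (\<Sum>k<n0. - ((1/l) ^ Suc k) * g ((\<tau> ^^ Suc k) x))"
            unfolding P_def by (simp only: funpow_Suc_right comp_apply)
          have e2: "l * P g x = (\<Sum>k<n0. l * (- ((1/l) ^ Suc k) * g ((\<tau> ^^ k) x)))"
            unfolding P_def by (rule sum_distrib_left)
          show ?thesis by (simp only: e1 e2 sum_subtractf[symmetric])
        qed
        then show ?thesis using Ptel[of g x] by (simp add: y_def)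
      qed
      have "comp_op X \<tau> (S g) x - l * S g x = S g (\<tau> x) - l * S g x" using True by (simp add: comp_op_def)
      also have "\<dots> = (P g (\<tau> x) - l * P g x) + (1/l) ^ n0 * (Q g (\<tau> y) - l * Q g y)"
        using Sform[OF g tx[OF True]] Sform[OF g True] ty by (simp add: y_def algebra_simps)
      also have "\<dots> = g x" unfolding Peq Qeq by simp
      finally show ?thesis .
    qed
  qed
  have 1: "S (\<lambda>x. comp_op X \<tau> f x - l * f x) = f" if f: "f \<in> C0 X" for f
  proof
    define gg where "gg = (\<lambda>x. comp_op X \<tau> f x - l * f x)"
    have cf: "comp_op X \<tau> f = compf X \<tau> f" by (simp add: comp_op_def compf_def fun_eq_iff)
    have ggC0: "gg \<in> C0 X"
    proof -
      have "(\<lambda>x. compf X \<tau> f x + (- l) * f x) \<in> C0 X"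
        by (intro C0_add C0_scale C0_comp cont pr f)
      then show ?thesis unfolding gg_def cf by simp
    qed
    have ggz: "gg z = f (\<tau> z) - l * f z" if "z \<in> topspace X" for z
      using that by (simp add: gg_def comp_op_def)
    fix x show "S (\<lambda>x. comp_op X \<tau> f x - l * f x) x = f x"
    proof (cases "x \<in> topspace X")
      case False then show ?thesis using C0_D(3)[OF f] by (simp add: S_def Ser_def)
    next
      case True
      define y where "y = (\<tau> ^^ n0) x"
      have yY: "y \<in> Y" unfolding y_def by (rule tnY[OF True])
      have Peq: "P gg x = f x - (1/l) ^ n0 * f y"
      proof -
        have "P gg x = (\<Sum>k<n0. - ((1/l) ^ Suc k) * f ((\<tau> ^^ Suc k) x) - l * (- ((1/l) ^ Suc k) * f ((\<tau> ^^ k) x)))"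
          unfolding P_def
        proof (rule sum.cong[OF refl])
          fix k
          have "(\<tau> ^^ k) x \<in> topspace X" by (rule iter_top[OF cont True])
          then show "- ((1/l) ^ Suc k) * gg ((\<tau> ^^ k) x) = - ((1/l) ^ Suc k) * f ((\<tau> ^^ Suc k) x) - l * (- ((1/l) ^ Suc k) * f ((\<tau> ^^ k) x))"
          proof -
            have e: "gg ((\<tau> ^^ k) x) = f ((\<tau> ^^ Suc k) x) - l * f ((\<tau> ^^ k) x)"
              using ggz[OF \<open>(\<tau> ^^ k) x \<in> topspace X\<close>] by simp
            show ?thesis unfolding e by (simp only: right_diff_distrib mult_minus_left mult_minus_right diff_minus_eq_add mult.left_commute[of l] minus_diff_eq)
          qed
        qed
        then show ?thesis using Ptel[of f x] by (simp add: y_def)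
      qed
      have Qeq: "Q gg y = f y"
      proof -
        have "Q gg y = (\<Sum>j. l ^ j * f ((s ^^ j) y) - l ^ Suc j * f ((s ^^ Suc j) y))"
          unfolding Q_def
        proof (rule arg_cong[where f=suminf], rule ext)
          fix j
          have "(s ^^ Suc j) y \<in> topspace X" using sjY[OF yY] Ysub by blast
          then show "l ^ j * gg ((s ^^ Suc j) y) = l ^ j * f ((s ^^ j) y) - l ^ Suc j * f ((s ^^ Suc j) y)"
          proof -
            have e: "gg ((s ^^ Suc j) y) = f ((s ^^ j) y) - l * f ((s ^^ Suc j) y)"
              using ggz[OF \<open>(s ^^ Suc j) y \<in> topspace X\<close>] tsj[OF yY, of j] by simp
            show ?thesis unfolding e by (simp only: right_diff_distrib power_Suc mult.assoc mult.left_commute[of l])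
          qed
        qed
        also have "\<dots> = f y" using geo_tel[OF l(2) f, of "\<lambda>j. (s ^^ j) y"] by simp
        finally show ?thesis .
      qed
      have "S gg x = f x" using Sform[OF ggC0 True] Peq Qeq by (simp add: y_def)
      then show ?thesis by (simp add: gg_def)
    qed
  qed
  show ?thesis unfolding op_spectrum_def using bo 1 2 by blast
qed


lemma fp: "(f ^^ (m + n)) x = (f ^^ m) ((f ^^ n) x)"
  by (simp add: funpow_add)

lemma small_pow:
  fixes x K :: real
  assumes "0 \<le> x" "x < 1" "0 \<le> K"
  shows "\<exists>n. K * x ^ Suc n < 1"
proof -
  obtain n where n: "x ^ n < 1 / (K + 1)" using real_arch_pow_inv[of "1 / (K + 1)" x] assms by auto
  have "x ^ Suc n \<le> x ^ n" using assms by (simp add: mult_left_le_one_le)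
  then have "K * x ^ Suc n \<le> K * x ^ n" using assms(3) by (rule mult_left_mono)
  also have "\<dots> \<le> K * (1 / (K + 1))" using n assms(3) by (intro mult_left_mono) auto
  also have "\<dots> < 1" using assms(3) by (simp add: field_simps)
  finally show ?thesis by blast
qed

lemma unit_sum:
  fixes l :: complex
  assumes "cmod l = 1"
  shows "(\<Sum>j\<le>n. l ^ (p j) * cnj l ^ (p j)) = of_nat (Suc n)"
proof -
  have "l * cnj l = 1" using complex_norm_square[of l] assms by simp
  then have "l ^ (p j) * cnj l ^ (p j) = 1" for j by (metis power_mult_distrib power_one)
  then show ?thesis by simp
qed

lemma cball_sub_primal:
  assumes H: "Hausdorff_space X" and L: "locally_compact_space X"
    and cont: "continuous_map X X \<tau>" and pr: "proper_map X X \<tau>"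
    and hz: "\<And>n. \<exists>z\<in>topspace X. (\<tau> ^^ n) z \<notin> (\<tau> ^^ Suc n) ` topspace X"
  shows "cball 0 1 \<subseteq> op_spectrum X (comp_op X \<tau>)"
proof
  fix l :: complex assume "l \<in> cball 0 1"
  then have l1: "cmod l \<le> 1" by simp
  show "l \<in> op_spectrum X (comp_op X \<tau>)"
  proof (rule ccontr)
    assume "l \<notin> op_spectrum X (comp_op X \<tau>)"
    then obtain S where S: "bounded_op X S" "\<forall>f\<in>C0 X. S (\<lambda>x. comp_op X \<tau> f x - l * f x) = f"
      unfolding op_spectrum_def by blast
    obtain K where K: "0 \<le> K" "\<forall>f\<in>C0 X. S f \<in> C0 X \<and> sup_norm X (S f) \<le> K * sup_norm X f"
      using bounded_op_K[OF S(1)] by blast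
    have K': "\<forall>f\<in>C0 X. sup_norm X (S f) \<le> K * sup_norm X f" using K(2) by blast
    have P: "cmod (\<Sum>j\<le>n. l ^ (n - j) * u j) \<le> K * cmod l ^ Suc n"
      if u: "\<And>j. j \<le> n \<Longrightarrow> cmod (u j) \<le> 1" for n u
    proof -
      obtain z where z: "z \<in> topspace X" "(\<tau> ^^ n) z \<notin> (\<tau> ^^ Suc n) ` topspace X" using hz by blast
      show ?thesis by (rule primal[OF H L cont pr S(1) S(2) K(1) K' z u])
    qed
    show False
    proof (cases "cmod l < 1")
      case True
      obtain n where n: "K * cmod l ^ Suc n < 1" using small_pow[of "cmod l" K] True K(1) by auto
      have "cmod (\<Sum>j\<le>n. l ^ (n - j) * (if j = n then 1 else 0)) \<le> K * cmod l ^ Suc n"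
        by (rule P) simp
      moreover have "(\<Sum>j\<le>n. l ^ (n - j) * (if j = n then 1 else 0)) = (\<Sum>j\<le>n. if j = n then 1 else 0)"
        by (rule sum.cong) auto
      ultimately show False using n by simp
    next
      case False
      then have l1': "cmod l = 1" using l1 by simp
      define n where "n = nat \<lceil>K\<rceil>"
      have "cmod (\<Sum>j\<le>n. l ^ (n - j) * cnj l ^ (n - j)) \<le> K * cmod l ^ Suc n"
        by (rule P) (simp add: norm_power l1')
      then have "real (Suc n) \<le> K" using unit_sum[OF l1', of "\<lambda>j. n - j" n] l1'
        by (metis mult_cancel_left2 norm_of_nat of_nat_Suc power_one)
      moreover have "K \<le> real n" unfolding n_def by linarith
      ultimately show False by simp
    qed
  qed
qed

lemma cball_sub_dual:
  assumes H: "Hausdorff_space X" and L: "locally_compact_space X"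
    and cont: "continuous_map X X \<tau>"
    and a: "\<And>k. a k \<in> topspace X" "\<And>k. \<tau> (a (Suc k)) = a k"
    and b: "\<And>k. b k \<in> topspace X" "\<And>k. \<tau> (b (Suc k)) = b k"
    and ab: "\<tau> (a 0) = \<tau> (b 0)"
    and binj: "inj b" and disj: "\<And>j k. a j \<noteq> b k"
  shows "cball 0 1 \<subseteq> op_spectrum X (comp_op X \<tau>)"
proof
  fix l :: complex assume "l \<in> cball 0 1"
  then have l1: "cmod l \<le> 1" by simp
  show "l \<in> op_spectrum X (comp_op X \<tau>)"
  proof (rule ccontr)
    assume "l \<notin> op_spectrum X (comp_op X \<tau>)"
    then obtain S where S: "bounded_op X S" "\<forall>g\<in>C0 X. (\<lambda>x. comp_op X \<tau> (S g) x - l * S g x) = g"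
      unfolding op_spectrum_def by blast
    obtain K where K: "0 \<le> K" "\<forall>f\<in>C0 X. S f \<in> C0 X \<and> sup_norm X (S f) \<le> K * sup_norm X f"
      using bounded_op_K[OF S(1)] by blast
    have K': "\<forall>f\<in>C0 X. sup_norm X (S f) \<le> K * sup_norm X f" using K(2) by blast
    have P: "cmod (\<Sum>k\<le>n. l ^ k * u k) \<le> (2 * K) * cmod l ^ Suc n"
      if u: "\<And>k. k \<le> n \<Longrightarrow> cmod (u k) \<le> 1" for n u
      using dual[OF H L cont S(1) S(2) K(1) K' a b ab inj_on_subset[OF binj] disj u] by simp
    have K2: "0 \<le> 2 * K" using K(1) by simp
    show False
    proof (cases "cmod l < 1")
      case True
      obtain n where n: "(2 * K) * cmod l ^ Suc n < 1" using small_pow[of "cmod l" "2 * K"] True K2 by auto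
      have "cmod (\<Sum>k\<le>n. l ^ k * (if k = 0 then 1 else 0)) \<le> (2 * K) * cmod l ^ Suc n"
        by (rule P) simp
      moreover have "(\<Sum>k\<le>n. l ^ k * (if k = 0 then 1 else 0)) = (\<Sum>k\<le>n. if k = 0 then 1 else 0)"
        by (rule sum.cong) auto
      ultimately show False using n by simp
    next
      case False
      then have l1': "cmod l = 1" using l1 by simp
      define n where "n = nat \<lceil>2 * K\<rceil>"
      have "cmod (\<Sum>k\<le>n. l ^ k * cnj l ^ k) \<le> (2 * K) * cmod l ^ Suc n"
        by (rule P) (simp add: norm_power l1')
      then have "real (Suc n) \<le> 2 * K" using unit_sum[OF l1', of "\<lambda>k. k" n] l1'
        by (metis mult_cancel_left2 norm_of_nat of_nat_Suc power_one)
      moreover have "2 * K \<le> real n" unfolding n_def by linarith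
      ultimately show False by simp
    qed
  qed
qed


definition per :: "('a \<Rightarrow> 'a) \<Rightarrow> 'a \<Rightarrow> bool" where
  "per \<tau> x \<longleftrightarrow> (\<exists>q>0. (\<tau> ^^ q) x = x)"

lemma per_iter:
  assumes "per \<tau> x" shows "per \<tau> ((\<tau> ^^ m) x)"
proof -
  obtain q where q: "q > 0" "(\<tau> ^^ q) x = x" using assms unfolding per_def by blast
  have "(\<tau> ^^ q) ((\<tau> ^^ m) x) = (\<tau> ^^ m) ((\<tau> ^^ q) x)"
    by (metis add.commute fp)
  then show ?thesis using q unfolding per_def by auto
qed

lemma per_key:
  assumes "(\<tau> ^^ m) x = y" "m > 0" "\<tau> x = \<tau> y"
  shows "per \<tau> y"
proof -
  have "(\<tau> ^^ m) (\<tau> x) = \<tau> ((\<tau> ^^ m) x)" by (simp add: funpow_swap1)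
  then have "per \<tau> (\<tau> x)" using assms unfolding per_def by auto
  then have "per \<tau> ((\<tau> ^^ (m - 1)) (\<tau> x))" by (rule per_iter)
  moreover have "(\<tau> ^^ (m - 1)) (\<tau> x) = y"
    using assms(1,2) by (metis Suc_diff_1 comp_apply funpow_Suc_right)
  ultimately show ?thesis by simp
qed

lemma not_both_per:
  assumes "a \<noteq> b" "\<tau> a = \<tau> b" "per \<tau> a" "per \<tau> b"
  shows False
proof -
  obtain q where q: "q > 0" "(\<tau> ^^ q) a = a" using assms(3) unfolding per_def by blast
  obtain r where r: "r > 0" "(\<tau> ^^ r) b = b" using assms(4) unfolding per_def by blast
  have pa: "(\<tau> ^^ (q * m)) a = a" for m
  proof (induction m)
    case (Suc m)
    have "(\<tau> ^^ (q * Suc m)) a = (\<tau> ^^ q) ((\<tau> ^^ (q * m)) a)" by (simp add: fp[symmetric])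
    then show ?case using Suc q by simp
  qed simp
  have pb: "(\<tau> ^^ (r * m)) b = b" for m
  proof (induction m)
    case (Suc m)
    have "(\<tau> ^^ (r * Suc m)) b = (\<tau> ^^ r) ((\<tau> ^^ (r * m)) b)" by (simp add: fp[symmetric])
    then show ?case using Suc r by simp
  qed simp
  define N where "N = q * r"
  have N: "N > 0" using q r by (simp add: N_def)
  have a1: "(\<tau> ^^ N) a = a" using pa[of r] by (simp add: N_def)
  have b1: "(\<tau> ^^ N) b = b" using pb[of q] by (simp add: N_def mult.commute)
  have "(\<tau> ^^ N) a = (\<tau> ^^ (N - 1)) (\<tau> a)" "(\<tau> ^^ N) b = (\<tau> ^^ (N - 1)) (\<tau> b)"
    using N by (metis Suc_diff_1 comp_apply funpow_Suc_right)+
  then show False using a1 b1 assms(1,2) by simp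
qed

lemma chains:
  assumes cont: "continuous_map X X \<tau>" and Ysub: "Y \<subseteq> topspace X" and YY: "\<tau> ` Y = Y"
    and ab': "a' \<in> Y" "b' \<in> Y" "a' \<noteq> b'" "\<tau> a' = \<tau> b'"
  shows "\<exists>a b. (\<forall>k. a k \<in> topspace X) \<and> (\<forall>k. \<tau> (a (Suc k)) = a k) \<and> (\<forall>k. b k \<in> topspace X)
     \<and> (\<forall>k. \<tau> (b (Suc k)) = b k) \<and> \<tau> (a 0) = \<tau> (b 0) \<and> inj b \<and> (\<forall>j k. a j \<noteq> b k)"
proof -
  define s where "s = inv_into Y \<tau>"
  have sY: "s y \<in> Y" if "y \<in> Y" for y
    unfolding s_def using that YY by (metis inv_into_into)
  have ts: "\<tau> (s y) = y" if "y \<in> Y" for y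
    unfolding s_def using that YY by (metis f_inv_into_f)
  have sjY: "(s ^^ j) y \<in> Y" if "y \<in> Y" for y j
    using that by (induction j) (auto intro: sY)
  have tsj: "\<tau> ((s ^^ Suc j) y) = (s ^^ j) y" if "y \<in> Y" for y j
    using ts[OF sjY[OF that, of j]] by simp
  have tjsj: "(\<tau> ^^ j) ((s ^^ j) y) = y" if "y \<in> Y" for y j
  proof (induction j)
    case (Suc j)
    have "(\<tau> ^^ Suc j) ((s ^^ Suc j) y) = (\<tau> ^^ j) (\<tau> ((s ^^ Suc j) y))"
      by (simp only: funpow_Suc_right comp_apply)
    then show ?case using tsj[OF that, of j] Suc by simp
  qed simp
  obtain a0 b0 where ab0: "a0 \<in> Y" "b0 \<in> Y" "a0 \<noteq> b0" "\<tau> a0 = \<tau> b0" "\<not> per \<tau> b0"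
  proof (cases "per \<tau> b'")
    case True
    then have "\<not> per \<tau> a'" using not_both_per[OF ab'(3,4)] by blast
    then show ?thesis using that[of b' a'] ab' by auto
  next
    case False then show ?thesis using that[of a' b'] ab' by auto
  qed
  define b where "b = (\<lambda>k. (s ^^ k) b0)"
  have btop: "b k \<in> topspace X" for k unfolding b_def using sjY[OF ab0(2)] Ysub by blast
  have bch: "\<tau> (b (Suc k)) = b k" for k unfolding b_def by (rule tsj[OF ab0(2)])
  have tb: "(\<tau> ^^ k) (b k) = b0" for k unfolding b_def by (rule tjsj[OF ab0(2)])
  have bnp: "\<not> per \<tau> (b k)" for k
    using per_iter[of \<tau> "b k" k] tb[of k] ab0(5) by auto
  have binj: "inj b"
  proof (rule injI)
    have *: False if ij: "i < j" "b i = b j" for i j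
    proof -
      have "(\<tau> ^^ j) (b i) = (\<tau> ^^ (j - i)) ((\<tau> ^^ i) (b i))"
        using ij(1) by (metis fp le_add_diff_inverse2 less_imp_le)
      then have "(\<tau> ^^ (j - i)) b0 = b0" using tb[of i] tb[of j] ij(2) by simp
      moreover have "j - i > 0" using ij(1) by simp
      ultimately show False using ab0(5) unfolding per_def by blast
    qed
    fix i j assume "b i = b j"
    then show "i = j" using *[of i j] *[of j i] by (cases i j rule: linorder_cases) auto
  qed
  show ?thesis
  proof (cases "per \<tau> a0")
    case True
    then obtain q where q: "q > 0" "(\<tau> ^^ q) a0 = a0" unfolding per_def by blast
    define a where "a = (\<lambda>k. (\<tau> ^^ (k * (q - 1))) a0)"
    have atop: "a k \<in> topspace X" for k
      unfolding a_def using iter_top[OF cont] ab0(1) Ysub by blast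
    have ach: "\<tau> (a (Suc k)) = a k" for k
    proof -
      have e: "Suc (Suc k * (q - 1)) = k * (q - 1) + q" using q(1) by (cases q) (auto simp: algebra_simps)
      have "\<tau> (a (Suc k)) = (\<tau> ^^ Suc (Suc k * (q - 1))) a0" by (simp add: a_def)
      also have "\<dots> = (\<tau> ^^ (k * (q - 1))) ((\<tau> ^^ q) a0)" unfolding e fp ..
      finally show ?thesis using q(2) by (simp add: a_def)
    qed
    have ap: "per \<tau> (a j)" for j unfolding a_def by (rule per_iter[OF True])
    have "(\<forall>k. a k \<in> topspace X) \<and> (\<forall>k. \<tau> (a (Suc k)) = a k) \<and> (\<forall>k. b k \<in> topspace X)
     \<and> (\<forall>k. \<tau> (b (Suc k)) = b k) \<and> \<tau> (a 0) = \<tau> (b 0) \<and> inj b \<and> (\<forall>j k. a j \<noteq> b k)"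
      using atop ach btop bch binj ab0(4) ap bnp by (auto simp: a_def b_def) metis
    then show ?thesis by blast
  next
    case False
    define a where "a = (\<lambda>k. (s ^^ k) a0)"
    have atop: "a k \<in> topspace X" for k unfolding a_def using sjY[OF ab0(1)] Ysub by blast
    have ach: "\<tau> (a (Suc k)) = a k" for k unfolding a_def by (rule tsj[OF ab0(1)])
    have ta: "(\<tau> ^^ k) (a k) = a0" for k unfolding a_def by (rule tjsj[OF ab0(1)])
    have disj: "a j \<noteq> b k" for j k
    proof
      assume e: "a j = b k"
      consider "j = k" | "j < k" | "k < j" by linarith
      then show False
      proof cases
        case 1 then show False using ta[of j] tb[of k] e ab0(3) by simp
      next
        case 2
        have "(\<tau> ^^ k) (a j) = (\<tau> ^^ (k - j)) ((\<tau> ^^ j) (a j))"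
          using 2 by (metis fp le_add_diff_inverse2 less_imp_le)
        then have "(\<tau> ^^ (k - j)) a0 = b0" using ta[of j] tb[of k] e by simp
        then have "per \<tau> b0" using per_key[where \<tau>=\<tau> and m="k - j" and x=a0 and y=b0] 2 ab0(4) by simp
        then show False using ab0(5) by simp
      next
        case 3
        have "(\<tau> ^^ j) (b k) = (\<tau> ^^ (j - k)) ((\<tau> ^^ k) (b k))"
          using 3 by (metis fp le_add_diff_inverse2 less_imp_le)
        then have "(\<tau> ^^ (j - k)) b0 = a0" using ta[of j] tb[of k] e by simp
        then have "per \<tau> a0" using per_key[where \<tau>=\<tau> and m="j - k" and x=b0 and y=a0] 3 ab0(4) by simp
        then show False using False by simp
      qed
    qed
    have "(\<forall>k. a k \<in> topspace X) \<and> (\<forall>k. \<tau> (a (Suc k)) = a k) \<and> (\<forall>k. b k \<in> topspace X)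
     \<and> (\<forall>k. \<tau> (b (Suc k)) = b k) \<and> \<tau> (a 0) = \<tau> (b 0) \<and> inj b \<and> (\<forall>j k. a j \<noteq> b k)"
      using atop ach btop bch binj disj ab0(4) by (auto simp: a_def b_def)
    then show ?thesis by blast
  qed
qed


theorem theorem4p3:
  fixes X :: "'a topology" and \<tau> :: "'a \<Rightarrow> 'a"
  assumes "Hausdorff_space X" and "locally_compact_space X"
    and "continuous_map X X \<tau>" and "proper_map X X \<tau>"
  shows "(op_spectrum X (comp_op X \<tau>) = cball 0 1 \<or> {z. 0 < cmod z \<and> cmod z < 1} \<subseteq> - op_spectrum X (comp_op X \<tau>))
    \<and> (\<tau> ` topspace X \<noteq> topspace X \<longrightarrow> 0 \<in> op_spectrum X (comp_op X \<tau>))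
    \<and> ((\<forall>n. (\<tau> ^^ Suc n) ` topspace X \<noteq> (\<tau> ^^ n) ` topspace X) \<longrightarrow> op_spectrum X (comp_op X \<tau>) = cball 0 1)
    \<and> ((\<exists>n0. (\<tau> ^^ Suc n0) ` topspace X = (\<tau> ^^ n0) ` topspace X)
        \<longrightarrow> op_spectrum X (comp_op X \<tau>) = cball 0 1 \<or> op_spectrum X (comp_op X \<tau>) \<subseteq> sphere 0 1 \<union> {0})"
proof -
  note H = assms(1) and L = assms(2) and cont = assms(3) and pr = assms(4)
  let ?\<sigma> = "op_spectrum X (comp_op X \<tau>)"
  have A: "?\<sigma> \<subseteq> cball 0 1"
  proof
    fix l assume l: "l \<in> ?\<sigma>"
    show "l \<in> cball 0 1"
    proof (rule ccontr)
      assume "l \<notin> cball 0 1"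
      then have "1 < cmod l" by simp
      then show False using not_spec_big[OF cont pr] l by blast
    qed
  qed
  have I: "\<tau> ` topspace X \<noteq> topspace X \<longrightarrow> 0 \<in> ?\<sigma>"
  proof
    assume ne: "\<tau> ` topspace X \<noteq> topspace X"
    have "\<tau> ` topspace X \<subseteq> topspace X" using cont by (auto simp: continuous_map_def)
    then obtain z where z: "z \<in> topspace X" "z \<notin> \<tau> ` topspace X" using ne by blast
    show "0 \<in> ?\<sigma>"
    proof (rule ccontr)
      assume "0 \<notin> ?\<sigma>"
      then obtain S where S: "bounded_op X S" "\<forall>f\<in>C0 X. S (\<lambda>x. comp_op X \<tau> f x - 0 * f x) = f"
        unfolding op_spectrum_def by blast
      obtain K where K: "0 \<le> K" "\<forall>f\<in>C0 X. S f \<in> C0 X \<and> sup_norm X (S f) \<le> K * sup_norm X f"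
        using bounded_op_K[OF S(1)] by blast
      have K': "\<forall>f\<in>C0 X. sup_norm X (S f) \<le> K * sup_norm X f" using K(2) by blast
      have z': "(\<tau> ^^ 0) z \<notin> (\<tau> ^^ Suc 0) ` topspace X" using z(2) by simp
      have "cmod (\<Sum>j\<le>0. (0::complex) ^ (0 - j) * 1) \<le> K * cmod (0::complex) ^ Suc 0"
        by (rule primal[OF H L cont pr S(1) S(2) K(1) K' z(1) z']) simp
      then show False by simp
    qed
  qed
  have II: "(\<forall>n. (\<tau> ^^ Suc n) ` topspace X \<noteq> (\<tau> ^^ n) ` topspace X) \<longrightarrow> ?\<sigma> = cball 0 1"
  proof
    assume ne: "\<forall>n. (\<tau> ^^ Suc n) ` topspace X \<noteq> (\<tau> ^^ n) ` topspace X"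
    have hz: "\<exists>z\<in>topspace X. (\<tau> ^^ n) z \<notin> (\<tau> ^^ Suc n) ` topspace X" for n
    proof -
      have "(\<tau> ^^ Suc n) ` topspace X \<subseteq> (\<tau> ^^ n) ` topspace X" by (rule iter_image_mono[OF cont]) simp
      then obtain y where "y \<in> (\<tau> ^^ n) ` topspace X" "y \<notin> (\<tau> ^^ Suc n) ` topspace X"
        using ne by blast
      then show ?thesis by blast
    qed
    show "?\<sigma> = cball 0 1" using A cball_sub_primal[OF H L cont pr hz] by blast
  qed
  have III: "(\<exists>n0. (\<tau> ^^ Suc n0) ` topspace X = (\<tau> ^^ n0) ` topspace X)
        \<longrightarrow> ?\<sigma> = cball 0 1 \<or> ?\<sigma> \<subseteq> sphere 0 1 \<union> {0}"
  proof
    assume "\<exists>n0. (\<tau> ^^ Suc n0) ` topspace X = (\<tau> ^^ n0) ` topspace X"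
    then obtain n0 where n0: "(\<tau> ^^ Suc n0) ` topspace X = (\<tau> ^^ n0) ` topspace X" by blast
    define Y where "Y = (\<tau> ^^ n0) ` topspace X"
    have YY: "\<tau> ` Y = Y" using n0 unfolding Y_def by (simp add: image_comp)
    have Ysub: "Y \<subseteq> topspace X" unfolding Y_def using iter_top[OF cont] by blast
    show "?\<sigma> = cball 0 1 \<or> ?\<sigma> \<subseteq> sphere 0 1 \<union> {0}"
    proof (cases "inj_on \<tau> Y")
      case True
      have "?\<sigma> \<subseteq> sphere 0 1 \<union> {0}"
      proof
        fix l assume l: "l \<in> ?\<sigma>"
        then have "cmod l \<le> 1" using A by auto
        moreover have "\<not> (0 < cmod l \<and> cmod l < 1)"
          using not_spec_small[OF cont pr Y_def YY True] l by blast
        ultimately show "l \<in> sphere 0 1 \<union> {0}" by auto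
      qed
      then show ?thesis by blast
    next
      case False
      then obtain a' b' where ab': "a' \<in> Y" "b' \<in> Y" "a' \<noteq> b'" "\<tau> a' = \<tau> b'"
        unfolding inj_on_def by blast
      obtain a b where ab: "\<forall>k. a k \<in> topspace X" "\<forall>k. \<tau> (a (Suc k)) = a k" "\<forall>k. b k \<in> topspace X"
        "\<forall>k. \<tau> (b (Suc k)) = b k" "\<tau> (a 0) = \<tau> (b 0)" "inj b" "\<forall>j k. a j \<noteq> b k"
        using chains[OF cont Ysub YY ab'] by blast
      have "cball 0 1 \<subseteq> ?\<sigma>"
        by (rule cball_sub_dual[OF H L cont, where a=a and b=b]) (use ab in auto)
      then show ?thesis using A by blast
    qed
  qed
  have Z: "?\<sigma> = cball 0 1 \<or> {z. 0 < cmod z \<and> cmod z < 1} \<subseteq> - ?\<sigma>"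
  proof (cases "\<exists>n0. (\<tau> ^^ Suc n0) ` topspace X = (\<tau> ^^ n0) ` topspace X")
    case True
    then have "?\<sigma> = cball 0 1 \<or> ?\<sigma> \<subseteq> sphere 0 1 \<union> {0}" using III by blast
    then show ?thesis by auto
  next
    case False then show ?thesis using II by blast
  qed
  show ?thesis using Z I II III by blast
qed

end
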